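(* In the setting below, for every face $F$ of $\mathcal{P}_\lambda$, $\phi(F)$ is a face of the ladder diagram $\Gamma_{\mathbf{k}}$, i.e. $\phi(F)\in\mathcal{F}(\Gamma_{\mathbf{k}})$.
   Context: Let $\mathbf{k}=(k_1,\dots,k_s)$ be positive integers with sum $n$, $n_0=0$, $n_i=\sum_{j\le i}k_j$, and $\lambda=(\lambda_1,\dots,\lambda_n)$ real with $\lambda_1=\cdots=\lambda_{n_1}>\lambda_{n_1+1}=\cdots=\lambda_{n_2}>\cdots>\lambda_{n_{s-1}+1}=\cdots=\lambda_n$. Let $I=\{(i,j)\in\mathbb{Z}^2:i,j\ge1,i+j\le n\}$; $\mathcal{P}_\lambda=\{x=(x_{i,j})_{(i,j)\in I}: x_{i,j+1}\ge x_{i,j}\ge x_{i+1,j}\ \forall (i,j)\in I\}$ with $x_{i,n+1-i}:=\lambda_i$. $Q^+$ is the directed graph on $\mathbb{Z}_{\ge0}^2$ with edges $((i,j),(i,j+1))$, $((i,j),(i+1,j))$. Terminal vertices $T_{\mathbf{k}}=\{(n_\ell,n-n_\ell):0\le\ell\le s\}$; $\Gamma_{\mathbf{k}}$ is the induced subgraph of $Q^+$ on $\{(a,b):a\le c,b\le d\text{ for some }(c,d)\in T_{\mathbf{k}}\}$. A positive path is a shortest directed path in $\Gamma_{\mathbf{k}}$ from $(0,0)$ to a terminal vertex. A face of $\Gamma_{\mathbf{k}}$ is a subgraph containing all terminal vertices that is a union of positive paths; $\mathcal{F}(\Gamma_{\mathbf{k}})$ is the set of faces. For a face $F$ of $\mathcal{P}_\lambda$,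 $\phi(F)$ is the subgraph of $Q^+$ whose edges are: all $((0,i),(0,i+1))$ and $((i,0),(i+1,0))$, $0\le i\le n-1$; $((i-1,j),(i,j))$ for $(i,j)\in I$ whenever some $x\in F$ has $x_{i,j}<x_{i,j+1}$; $((i,j-1),(i,j))$ for $(i,j)\in I$ whenever some $x\in F$ has $x_{i,j}>x_{i+1,j}$; its vertices are the endpoints of these edges. *)

theory Defs
  imports "HOL-Analysis.Analysis" "HOL-Library.Function_Algebras"
begin

(* Pointwise real vector space structure on functions, so that the library notion
   face_of applies to subsets of (nat \<times> nat \<Rightarrow> real). *)
instantiation "fun" :: (type, real_vector) real_vector
begin
definition scaleR_fun :: "real \<Rightarrow> ('a \<Rightarrow> 'b) \<Rightarrow> 'a \<Rightarrow> 'b" where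
  "scaleR_fun r f = (\<lambda>x. r *\<^sub>R f x)"
instance by standard (simp_all add: scaleR_fun_def fun_eq_iff scaleR_add_right scaleR_add_left)
end

type_synonym vert = "nat \<times> nat"
type_synonym graph = "vert set \<times> (vert \<times> vert) set"

definition nsum :: "nat list \<Rightarrow> nat \<Rightarrow> nat" where
  "nsum k l = sum_list (take l k)"

definition Iset :: "nat \<Rightarrow> vert set" where
  "Iset n = {(i,j). 1 \<le> i \<and> 1 \<le> j \<and> i + j \<le> n}"

(* x extended by the convention x_{i,n+1-i} := lambda_i *)
definition xext :: "nat \<Rightarrow> (nat \<Rightarrow> real) \<Rightarrow> (vert \<Rightarrow> real) \<Rightarrow> vert \<Rightarrow> real" where
  "xext n lam x p = (if fst p + snd p = n + 1 then lam (fst p) else x p)"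

(* Gelfand-Cetlin polytope P_lambda; points are functions on I (zero outside I) *)
definition GC :: "nat \<Rightarrow> (nat \<Rightarrow> real) \<Rightarrow> (vert \<Rightarrow> real) set" where
  "GC n lam = {x. (\<forall>p. p \<notin> Iset n \<longrightarrow> x p = 0) \<and>
     (\<forall>i j. (i,j) \<in> Iset n \<longrightarrow>
        xext n lam x (i,j) \<le> xext n lam x (i, j+1) \<and> xext n lam x (i+1, j) \<le> xext n lam x (i,j))}"

definition Qedge :: "vert \<Rightarrow> vert \<Rightarrow> bool" where
  "Qedge u v \<longleftrightarrow> v = (fst u, snd u + 1) \<or> v = (fst u + 1, snd u)"

definition terminals :: "nat list \<Rightarrow> vert set" where
  "terminals k = {(nsum k l, sum_list k - nsum k l) | l. l \<le> length k}"

definition GammaV :: "nat list \<Rightarrow> vert set" where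
  "GammaV k = {(a,b). \<exists>c d. (c,d) \<in> terminals k \<and> a \<le> c \<and> b \<le> d}"

definition GammaE :: "nat list \<Rightarrow> (vert \<times> vert) set" where
  "GammaE k = {(u,v). u \<in> GammaV k \<and> v \<in> GammaV k \<and> Qedge u v}"

definition is_dpath :: "nat list \<Rightarrow> vert list \<Rightarrow> bool" where
  "is_dpath k p \<longleftrightarrow> p \<noteq> [] \<and> set p \<subseteq> GammaV k \<and>
     (\<forall>i. Suc i < length p \<longrightarrow> (p ! i, p ! Suc i) \<in> GammaE k)"

definition is_shortest_dpath :: "nat list \<Rightarrow> vert \<Rightarrow> vert \<Rightarrow> vert list \<Rightarrow> bool" where
  "is_shortest_dpath k u v p \<longleftrightarrow> is_dpath k p \<and> hd p = u \<and> last p = v \<and>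
     (\<forall>q. is_dpath k q \<and> hd q = u \<and> last q = v \<longrightarrow> length p \<le> length q)"

definition positive_path :: "nat list \<Rightarrow> vert list \<Rightarrow> bool" where
  "positive_path k p \<longleftrightarrow> (\<exists>t \<in> terminals k. is_shortest_dpath k (0,0) t p)"

definition path_edges :: "vert list \<Rightarrow> (vert \<times> vert) set" where
  "path_edges p = {(p ! i, p ! Suc i) | i. Suc i < length p}"

definition ladder_faces :: "nat list \<Rightarrow> graph set" where
  "ladder_faces k = {G. terminals k \<subseteq> fst G \<and>
     (\<exists>P. (\<forall>p\<in>P. positive_path k p) \<and>
          fst G = (\<Union>p\<in>P. set p) \<and> snd G = (\<Union>p\<in>P. path_edges p))}"

definition phi_edges :: "nat \<Rightarrow> (nat \<Rightarrow> real) \<Rightarrow> (vert \<Rightarrow> real) set \<Rightarrow> (vert \<times> vert) set" where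
  "phi_edges n lam F =
     {((0,i),(0,i+1)) | i. i \<le> n - 1} \<union> {((i,0),(i+1,0)) | i. i \<le> n - 1}
     \<union> {((i-1,j),(i,j)) | i j. (i,j) \<in> Iset n \<and>
            (\<exists>x\<in>F. xext n lam x (i,j) < xext n lam x (i,j+1))}
     \<union> {((i,j-1),(i,j)) | i j. (i,j) \<in> Iset n \<and>
            (\<exists>x\<in>F. xext n lam x (i,j) > xext n lam x (i+1,j))}"

definition phi :: "nat \<Rightarrow> (nat \<Rightarrow> real) \<Rightarrow> (vert \<Rightarrow> real) set \<Rightarrow> graph" where
  "phi n lam F = (fst ` phi_edges n lam F \<union> snd ` phi_edges n lam F, phi_edges n lam F)"

end

theory Submission
  imports Defs
begin


definition epath :: "(vert \<times> vert) set \<Rightarrow> vert list \<Rightarrow> bool" where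
  "epath E p \<longleftrightarrow> p \<noteq> [] \<and> (\<forall>i. Suc i < length p \<longrightarrow> (p!i, p!Suc i) \<in> E)"

lemma epath_single: "epath E [u]"
  by (simp add: epath_def)

lemma epath_snoc:
  assumes "epath E p" "(last p, u) \<in> E"
  shows "epath E (p @ [u])"
  unfolding epath_def
proof (intro conjI allI impI)
  fix i assume i: "Suc i < length (p @ [u])"
  show "((p @ [u]) ! i, (p @ [u]) ! Suc i) \<in> E"
  proof (cases "Suc i < length p")
    case True then show ?thesis using assms(1) by (simp add: nth_append epath_def)
  next
    case False
    then have "Suc i = length p" using i by simp
    moreover have "p \<noteq> []" using assms(1) by (simp add: epath_def)
    ultimately have "i = length p - Suc 0" "p \<noteq> []" by auto
    then show ?thesis using assms(2) by (simp add: nth_append last_conv_nth)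
  qed
qed simp

lemma path_edges_append: "path_edges p \<subseteq> path_edges (p @ r)"
  unfolding path_edges_def
proof (rule subsetI)
  fix e assume "e \<in> {(p ! i, p ! Suc i) |i. Suc i < length p}"
  then obtain i where i: "e = (p!i, p!Suc i)" "Suc i < length p" by blast
  then have "e = ((p@r)!i, (p@r)!Suc i) \<and> Suc i < length (p@r)" by (simp add: nth_append)
  then show "e \<in> {((p@r) ! i, (p@r) ! Suc i) |i. Suc i < length (p@r)}" by blast
qed

lemma path_edges_snoc_last: "p \<noteq> [] \<Longrightarrow> (last p, u) \<in> path_edges (p @ [u])"
  unfolding path_edges_def
  by (rule CollectI, rule exI[of _ "length p - 1"]) (simp add: nth_append last_conv_nth)

lemma path_edges_sub: "epath E p \<Longrightarrow> path_edges p \<subseteq> E"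
  by (auto simp: path_edges_def epath_def)

lemma back_walk:
  assumes inc: "\<And>u. u \<in> V \<Longrightarrow> u \<noteq> (0,0) \<Longrightarrow> \<exists>w\<in>V. (w,u) \<in> E \<and> fst w + snd w < fst u + snd u"
  shows "u \<in> V \<Longrightarrow> \<exists>p. epath E p \<and> set p \<subseteq> V \<and> hd p = (0,0) \<and> last p = u"
proof (induction "fst u + snd u" arbitrary: u rule: less_induct)
  case less
  show ?case
  proof (cases "u = (0,0)")
    case True
    then show ?thesis using less.prems by (intro exI[of _ "[u]"]) (simp add: epath_single)
  next
    case False
    then obtain w where w: "w \<in> V" "(w,u) \<in> E" "fst w + snd w < fst u + snd u"
      using inc less.prems by blast
    then obtain p where p: "epath E p" "set p \<subseteq> V" "hd p = (0,0)" "last p = w"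
      using less.hyps by blast
    have "p \<noteq> []" using p(1) by (simp add: epath_def)
    then show ?thesis using p w less.prems
      by (intro exI[of _ "p @ [u]"]) (simp add: epath_snoc)
  qed
qed

lemma fwd_walk:
  assumes out: "\<And>u. u \<in> V \<Longrightarrow> fst u + snd u < N \<Longrightarrow> \<exists>w\<in>V. (u,w) \<in> E \<and> fst u + snd u < fst w + snd w"
    and bnd: "\<And>u. u \<in> V \<Longrightarrow> fst u + snd u \<le> N"
    and trm: "\<And>u. u \<in> V \<Longrightarrow> fst u + snd u = N \<Longrightarrow> u \<in> T"
  shows "epath E p \<Longrightarrow> set p \<subseteq> V \<Longrightarrow> \<exists>r. epath E (p @ r) \<and> set (p @ r) \<subseteq> V \<and> last (p @ r) \<in> T"
proof (induction "N - (fst (last p) + snd (last p))" arbitrary: p rule: less_induct)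
  case less
  have ne: "p \<noteq> []" using less.prems by (simp add: epath_def)
  then have lv: "last p \<in> V" using less.prems by auto
  show ?case
  proof (cases "fst (last p) + snd (last p) = N")
    case True
    then show ?thesis using less.prems lv trm by (intro exI[of _ "[]"]) simp
  next
    case False
    then have "fst (last p) + snd (last p) < N" using bnd lv by fastforce
    then obtain w where w: "w \<in> V" "(last p, w) \<in> E" "fst (last p) + snd (last p) < fst w + snd w"
      using out lv by blast
    have "N - (fst (last (p @ [w])) + snd (last (p @ [w]))) < N - (fst (last p) + snd (last p))"
      using w bnd[OF w(1)] by simp
    moreover have "epath E (p @ [w])" using less.prems w by (simp add: epath_snoc)
    moreover have "set (p @ [w]) \<subseteq> V" using less.prems w by simp
    ultimately obtain r where "epath E ((p @ [w]) @ r)" "set ((p @ [w]) @ r) \<subseteq> V" "last ((p @ [w]) @ r) \<in> T"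
      using less.hyps by blast
    then show ?thesis by (intro exI[of _ "w # r"]) simp
  qed
qed



lemma GC_D:
  assumes "x \<in> GC n lam" "(i,j) \<in> Iset n"
  shows "xext n lam x (i,j) \<le> xext n lam x (i,j+1)" "xext n lam x (i+1,j) \<le> xext n lam x (i,j)"
  using assms unfolding GC_def by blast+

lemma memB1: "i \<le> n - 1 \<Longrightarrow> ((0,i),(0,i+1)) \<in> phi_edges n lam F"
  unfolding phi_edges_def by blast
lemma memB2: "i \<le> n - 1 \<Longrightarrow> ((i,0),(i+1,0)) \<in> phi_edges n lam F"
  unfolding phi_edges_def by blast
lemma memV: "(i,j) \<in> Iset n \<Longrightarrow> x \<in> F \<Longrightarrow> xext n lam x (i,j) < xext n lam x (i,j+1)
   \<Longrightarrow> ((i-1,j),(i,j)) \<in> phi_edges n lam F"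
  unfolding phi_edges_def by blast
lemma memH: "(i,j) \<in> Iset n \<Longrightarrow> x \<in> F \<Longrightarrow> xext n lam x (i,j) > xext n lam x (i+1,j)
   \<Longrightarrow> ((i,j-1),(i,j)) \<in> phi_edges n lam F"
  unfolding phi_edges_def by blast

lemma E_cases:
  assumes "(u,v) \<in> phi_edges n lam F"
  obtains (B1) i where "i \<le> n - 1" "u = (0,i)" "v = (0,i+1)"
    | (B2) i where "i \<le> n - 1" "u = (i,0)" "v = (i+1,0)"
    | (V) i j x where "(i,j) \<in> Iset n" "x \<in> F" "xext n lam x (i,j) < xext n lam x (i,j+1)" "u = (i-1,j)" "v = (i,j)"
    | (H) i j x where "(i,j) \<in> Iset n" "x \<in> F" "xext n lam x (i,j) > xext n lam x (i+1,j)" "u = (i,j-1)" "v = (i,j)"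
  using assms unfolding phi_edges_def by blast

lemma E_step0:
  assumes "(u,v) \<in> phi_edges n lam F" "1 \<le> n"
  shows "Qedge u v \<and> fst v + snd v = fst u + snd u + 1 \<and> fst v + snd v \<le> n"
  using assms(1)
proof (cases rule: E_cases)
  case (B1 i) then show ?thesis
    using assms(2) by (auto simp: Qedge_def)
next
  case (B2 i) then show ?thesis
    using assms(2) by (auto simp: Qedge_def)
next
  case (V i j x) then show ?thesis
    by (auto simp: Qedge_def Iset_def)
next
  case (H i j x) then show ?thesis
    by (auto simp: Qedge_def Iset_def)
qed

lemma E_step:
  assumes "(u,v) \<in> phi_edges n lam F" "1 \<le> n"
  shows "Qedge u v" "fst v + snd v = fst u + snd u + 1" "fst v + snd v \<le> n"
  using E_step0[OF assms] by auto

lemma incoming: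
  assumes FG: "F \<subseteq> GC n lam" and e: "(u,v) \<in> phi_edges n lam F" and u0: "u \<noteq> (0,0)"
  shows "\<exists>w. (w,u) \<in> phi_edges n lam F"
  using e
proof (cases rule: E_cases)
  case (B1 i)
  then have "i - 1 \<le> n - 1" "i - 1 + 1 = i" using u0 by auto
  then show ?thesis using B1 memB1[of "i-1" n lam F] by metis
next
  case (B2 i)
  then have "i - 1 \<le> n - 1" "i - 1 + 1 = i" using u0 by auto
  then show ?thesis using B2 memB2[of "i-1" n lam F] by metis
next
  case (V i j x)
  note X = this
  have gx: "x \<in> GC n lam" using FG X by blast
  show ?thesis
  proof (cases "i = 1")
    case True
    then have "j - 1 \<le> n - 1" "j - 1 + 1 = j" using X by (auto simp: Iset_def)
    then show ?thesis using X True memB1[of "j-1" n lam F] by (metis diff_self_eq_0)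
  next
    case False
    then obtain i' where i': "i = Suc i'" "1 \<le> i'" using X by (cases i) (auto simp: Iset_def)
    have I1: "(i',j) \<in> Iset n" "(i',j+1) \<in> Iset n" using X i' by (auto simp: Iset_def)
    have a: "xext n lam x (i,j) \<le> xext n lam x (i',j)" using GC_D(2)[OF gx I1(1)] i' by simp
    have b: "xext n lam x (i',j) \<le> xext n lam x (i',j+1)" using GC_D(1)[OF gx I1(1)] by simp
    have c: "xext n lam x (i,j+1) \<le> xext n lam x (i',j+1)" using GC_D(2)[OF gx I1(2)] i' by simp
    show ?thesis
    proof (cases "xext n lam x (i',j) > xext n lam x (i'+1,j)")
      case True
      then show ?thesis using memH[OF I1(1) X(2) True] X i' by auto
    next
      case False
      then have "xext n lam x (i',j) < xext n lam x (i',j+1)" using a c X(3) i' by auto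
      then show ?thesis using memV[OF I1(1) X(2)] X i' by auto
    qed
  qed
next
  case (H i j x)
  note X = this
  have gx: "x \<in> GC n lam" using FG X by blast
  show ?thesis
  proof (cases "j = 1")
    case True
    then have "i - 1 \<le> n - 1" "i - 1 + 1 = i" using X by (auto simp: Iset_def)
    then show ?thesis using X True memB2[of "i-1" n lam F] by (metis diff_self_eq_0)
  next
    case False
    then obtain j' where j': "j = Suc j'" "1 \<le> j'" using X by (cases j) (auto simp: Iset_def)
    have I1: "(i,j') \<in> Iset n" "(i+1,j') \<in> Iset n" using X j' by (auto simp: Iset_def)
    have a: "xext n lam x (i,j') \<le> xext n lam x (i,j)" using GC_D(1)[OF gx I1(1)] j' by simp
    have b: "xext n lam x (i+1,j') \<le> xext n lam x (i+1,j)" using GC_D(1)[OF gx I1(2)] j' by simp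
    show ?thesis
    proof (cases "xext n lam x (i,j') < xext n lam x (i,j'+1)")
      case True
      then show ?thesis using memV[OF I1(1) X(2) True] X j' by auto
    next
      case False
      then have "xext n lam x (i,j') > xext n lam x (i+1,j')" using a b X(3) j' by auto
      then show ?thesis using memH[OF I1(1) X(2)] X j' by auto
    qed
  qed
qed

lemma outgoing:
  assumes FG: "F \<subseteq> GC n lam" and e: "(w,u) \<in> phi_edges n lam F" and s: "fst u + snd u < n"
  shows "\<exists>v. (u,v) \<in> phi_edges n lam F"
  using e
proof (cases rule: E_cases)
  case (B1 i)
  then have "i + 1 \<le> n - 1" using s by auto
  then show ?thesis using B1 memB1[of "i+1" n lam F] by metis
next
  case (B2 i)
  then have "i + 1 \<le> n - 1" using s by auto
  then show ?thesis using B2 memB2[of "i+1" n lam F] by metis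
next
  case (V i j x)
  note X = this
  have gx: "x \<in> GC n lam" using FG X by blast
  have I1: "(i+1,j) \<in> Iset n" "(i,j+1) \<in> Iset n" using X s by (auto simp: Iset_def)
  have a: "xext n lam x (i+1,j) \<le> xext n lam x (i,j)" using GC_D(2)[OF gx X(1)] by simp
  have b: "xext n lam x (i+1,j) \<le> xext n lam x (i+1,j+1)" using GC_D(1)[OF gx I1(1)] by simp
  show ?thesis
  proof (cases "xext n lam x (i,j+1) > xext n lam x (i+1,j+1)")
    case True
    then show ?thesis using memH[OF I1(2) X(2) True] X by auto
  next
    case False
    then have "xext n lam x (i+1,j) < xext n lam x (i+1,j+1)" using a X(3) by auto
    then show ?thesis using memV[OF I1(1) X(2)] X by auto
  qed
next
  case (H i j x)
  note X = this
  have gx: "x \<in> GC n lam" using FG X by blast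
  have I1: "(i+1,j) \<in> Iset n" "(i,j+1) \<in> Iset n" using X s by (auto simp: Iset_def)
  have a: "xext n lam x (i,j) \<le> xext n lam x (i,j+1)" using GC_D(1)[OF gx X(1)] by simp
  have b: "xext n lam x (i+1,j+1) \<le> xext n lam x (i,j+1)" using GC_D(2)[OF gx I1(2)] by simp
  show ?thesis
  proof (cases "xext n lam x (i+1,j) < xext n lam x (i+1,j+1)")
    case True
    then show ?thesis using memV[OF I1(1) X(2) True] X by auto
  next
    case False
    then have "xext n lam x (i,j+1) > xext n lam x (i+1,j+1)" using a X(3) by auto
    then show ?thesis using memH[OF I1(2) X(2)] X by auto
  qed
qed



lemma mono_j:
  assumes "x \<in> GC n lam" "1 \<le> i" "1 \<le> j" "i + j + d \<le> n + 1"
  shows "xext n lam x (i,j) \<le> xext n lam x (i,j+d)"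
  using assms(4)
proof (induction d)
  case 0 then show ?case by simp
next
  case (Suc d)
  have "(i, j+d) \<in> Iset n" using Suc.prems assms by (auto simp: Iset_def)
  then have "xext n lam x (i,j+d) \<le> xext n lam x (i,j+d+1)" using GC_D(1)[OF assms(1)] by blast
  then show ?case using Suc by simp
qed

lemma mono_i:
  assumes "x \<in> GC n lam" "1 \<le> i" "1 \<le> j" "i + d + j \<le> n + 1"
  shows "xext n lam x (i+d,j) \<le> xext n lam x (i,j)"
  using assms(4)
proof (induction d)
  case 0 then show ?case by simp
next
  case (Suc d)
  have "(i+d, j) \<in> Iset n" using Suc.prems assms by (auto simp: Iset_def)
  then have "xext n lam x (i+d+1,j) \<le> xext n lam x (i+d,j)" using GC_D(2)[OF assms(1)] by blast
  then show ?case using Suc by simp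
qed

lemma lam_chain:
  assumes "\<forall>m. i \<le> m \<and> m < i + d \<longrightarrow> lam m = lam (Suc m)"
  shows "lam i = (lam (i + d) :: real)"
  using assms by (induction d) auto

lemma GammaV_down: "(c,d) \<in> GammaV k \<Longrightarrow> a \<le> c \<Longrightarrow> b \<le> d \<Longrightarrow> (a,b) \<in> GammaV k"
  unfolding GammaV_def by (auto intro: le_trans)

lemma nsum_le: "nsum k l \<le> sum_list k"
proof -
  have "sum_list k = sum_list (take l k) + sum_list (drop l k)"
    by (metis append_take_drop_id sum_list_append)
  then show ?thesis by (simp add: nsum_def)
qed

lemma term0: "(0, sum_list k) \<in> terminals k"
  unfolding terminals_def
  by (rule CollectI, rule exI[of _ 0]) (simp add: nsum_def)

lemma termN: "(sum_list k, 0) \<in> terminals k"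
  unfolding terminals_def
  by (rule CollectI, rule exI[of _ "length k"]) (simp add: nsum_def)

lemma GammaV_term:
  assumes "u \<in> GammaV k" "fst u + snd u = sum_list k"
  shows "u \<in> terminals k"
proof -
  obtain a b where u: "u = (a,b)" by force
  obtain c d where cd: "(c,d) \<in> terminals k" "a \<le> c" "b \<le> d" using assms u unfolding GammaV_def by auto
  obtain l where l: "c = nsum k l" "d = sum_list k - nsum k l" "l \<le> length k"
    using cd(1) unfolding terminals_def by auto
  have "nsum k l \<le> sum_list k" by (rule nsum_le)
  then have "a = c" "b = d" using cd l assms u by auto
  then show ?thesis using cd u by simp
qed

lemma GammaV_sum: "u \<in> GammaV k \<Longrightarrow> fst u + snd u \<le> sum_list k"
proof -
  assume "u \<in> GammaV k"
  then obtain c d where cd: "(c,d) \<in> terminals k" "fst u \<le> c" "snd u \<le> d" unfolding GammaV_def by auto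
  obtain l where l: "c = nsum k l" "d = sum_list k - nsum k l"
    using cd(1) unfolding terminals_def by auto
  have "nsum k l \<le> sum_list k" by (rule nsum_le)
  then show ?thesis using cd l by auto
qed

lemma interior_in_GammaV:
  fixes k :: "nat list" and lam :: "nat \<Rightarrow> real"
  defines "n \<equiv> sum_list k"
  assumes lam_blocks: "\<forall>i. 1 \<le> i \<and> i < sum_list k \<longrightarrow>
           (if i \<in> {nsum k l | l. 1 \<le> l \<and> l < length k}
            then lam i > lam (Suc i) else lam i = lam (Suc i))"
    and x: "x \<in> GC n lam" and I: "(i,j) \<in> Iset n"
    and strict: "xext n lam x (i,j) < xext n lam x (i,j+1) \<or> xext n lam x (i,j) > xext n lam x (i+1,j)"
  shows "(i,j) \<in> GammaV k"
proof -
  have ij: "1 \<le> i" "1 \<le> j" "i + j \<le> n" using I by (auto simp: Iset_def)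
  define d where "d = n - i - j"
  have a1: "xext n lam x (i,j+1) \<le> xext n lam x (i,j+1+d)"
    using mono_j[OF x ij(1), of "j+1" d] ij unfolding d_def by simp
  have a2: "xext n lam x (i,j+1+d) = lam i"
    using ij unfolding d_def xext_def by simp
  have b1: "xext n lam x (i+1+d,j) \<le> xext n lam x (i+1,j)"
    using mono_i[OF x _ ij(2), of "i+1" d] ij unfolding d_def by simp
  have b2: "xext n lam x (i+1+d,j) = lam (i+1+d)"
    using ij unfolding d_def xext_def by simp
  have c1: "xext n lam x (i,j) \<le> xext n lam x (i,j+1)" "xext n lam x (i+1,j) \<le> xext n lam x (i,j)"
    using GC_D[OF x I] by auto
  have neq: "lam i \<noteq> lam (i + (1 + d))"
    using a1 a2 b1 b2 c1 strict by (auto simp: add.assoc)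
  then obtain m where m: "i \<le> m" "m < i + (1 + d)" "lam m \<noteq> lam (Suc m)"
    using lam_chain[of i "1 + d" lam] by blast
  have mr: "1 \<le> m" "m < sum_list k" using m ij unfolding d_def n_def by auto
  then have "m \<in> {nsum k l | l. 1 \<le> l \<and> l < length k}"
    using lam_blocks m(3) by (metis (no_types, lifting) less_irrefl)
  then obtain l where l: "m = nsum k l" "l < length k" by auto
  have "(nsum k l, sum_list k - nsum k l) \<in> terminals k"
    unfolding terminals_def using l by auto
  moreover have "j \<le> sum_list k - nsum k l" using m l ij unfolding d_def n_def by auto
  ultimately show ?thesis unfolding GammaV_def using m l by auto
qed



lemma dpath_len:
  assumes "is_dpath k q" "i < length q"
  shows "fst (q!i) + snd (q!i) = fst (q!0) + snd (q!0) + i"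
  using assms(2)
proof (induction i)
  case 0 then show ?case by simp
next
  case (Suc i)
  have "(q!i, q!Suc i) \<in> GammaE k" using assms(1) Suc.prems unfolding is_dpath_def by blast
  then have "Qedge (q!i) (q!Suc i)" unfolding GammaE_def by blast
  then have "fst (q!Suc i) + snd (q!Suc i) = fst (q!i) + snd (q!i) + 1" unfolding Qedge_def by auto
  then show ?case using Suc by simp
qed

lemma dpath_length:
  assumes "is_dpath k q"
  shows "fst (last q) + snd (last q) + 1 = fst (hd q) + snd (hd q) + length q"
proof -
  have ne: "q \<noteq> []" using assms unfolding is_dpath_def by blast
  then have "last q = q ! (length q - 1)" "hd q = q!0" by (simp_all add: last_conv_nth hd_conv_nth)
  moreover have "length q - 1 < length q" using ne by simp
  ultimately show ?thesis using dpath_len[OF assms, of "length q - 1"] ne by simp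
qed

lemma edge_in_set: "e \<in> path_edges q \<Longrightarrow> fst e \<in> set q \<and> snd e \<in> set q"
  unfolding path_edges_def by auto

theorem corollary2p4:
  fixes k :: "nat list" and lam :: "nat \<Rightarrow> real" and F :: "(nat \<times> nat \<Rightarrow> real) set"
  assumes k_ne: "k \<noteq> []"
    and k_pos: "\<forall>m \<in> set k. 0 < m"
    and lam_blocks: "\<forall>i. 1 \<le> i \<and> i < sum_list k \<longrightarrow>
           (if i \<in> {nsum k l | l. 1 \<le> l \<and> l < length k}
            then lam i > lam (Suc i) else lam i = lam (Suc i))"
    and F_face: "F face_of GC (sum_list k) lam"
    and F_ne: "F \<noteq> {}"
  shows "phi (sum_list k) lam F \<in> ladder_faces k"
proof -
  define n where "n = sum_list k"
  define E where "E = phi_edges n lam F"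
  define V where "V = fst ` E \<union> snd ` E"
  have FG: "F \<subseteq> GC n lam" using face_of_imp_subset[OF F_face] unfolding n_def .
  have n1: "1 \<le> n"
  proof -
    have "hd k \<in> set k" using k_ne by simp
    then have "sum_list k \<noteq> 0" using k_pos by auto
    then show ?thesis unfolding n_def by linarith
  qed
  have gam0: "(0, b) \<in> GammaV k" if "b \<le> n" for b
    using GammaV_down[of 0 n k 0 b] term0[of k] that unfolding n_def GammaV_def by blast
  have gamN: "(a, 0) \<in> GammaV k" if "a \<le> n" for a
    using termN[of k] that unfolding n_def GammaV_def by blast
  have EG: "u \<in> GammaV k \<and> v \<in> GammaV k" if e: "(u,v) \<in> E" for u v
    using e unfolding E_def
  proof (cases rule: E_cases)
    case (B1 i) then show ?thesis using gam0 n1 by auto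
  next
    case (B2 i) then show ?thesis using gamN n1 by auto
  next
    case (V i j x)
    then have "(i,j) \<in> GammaV k"
      using interior_in_GammaV[OF lam_blocks, of x i j] FG unfolding n_def by blast
    then show ?thesis using V GammaV_down by auto
  next
    case (H i j x)
    then have "(i,j) \<in> GammaV k"
      using interior_in_GammaV[OF lam_blocks, of x i j] FG unfolding n_def by blast
    then show ?thesis using H GammaV_down by auto
  qed
  have VG: "V \<subseteq> GammaV k" unfolding V_def using EG by force
  have EGE: "E \<subseteq> GammaE k"
    unfolding GammaE_def using EG E_step(1)[OF _ n1] unfolding E_def by blast
  have inc: "\<exists>w\<in>V. (w,u) \<in> E \<and> fst w + snd w < fst u + snd u"
    if uV: "u \<in> V" and u0: "u \<noteq> (0,0)" for u
  proof -
    have "\<exists>w. (w,u) \<in> E"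
    proof (cases "u \<in> snd ` E")
      case True then show ?thesis by force
    next
      case False
      then obtain v where "(u,v) \<in> E" using uV unfolding V_def by force
      then show ?thesis using incoming[OF FG _ u0] unfolding E_def by blast
    qed
    then obtain w where w: "(w,u) \<in> E" by blast
    then have "fst u + snd u = fst w + snd w + 1" using E_step(2)[OF _ n1] unfolding E_def by blast
    then show ?thesis using w unfolding V_def by force
  qed
  have out: "\<exists>w\<in>V. (u,w) \<in> E \<and> fst u + snd u < fst w + snd w"
    if uV: "u \<in> V" and us: "fst u + snd u < n" for u
  proof -
    have "\<exists>w. (u,w) \<in> E"
    proof (cases "u \<in> fst ` E")
      case True then show ?thesis by force
    next
      case False
      then obtain v where "(v,u) \<in> E" using uV unfolding V_def by force
      then show ?thesis using outgoing[OF FG _ us] unfolding E_def by blast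
    qed
    then obtain w where w: "(u,w) \<in> E" by blast
    then have "fst w + snd w = fst u + snd u + 1" using E_step(2)[OF _ n1] unfolding E_def by blast
    then show ?thesis using w unfolding V_def by force
  qed
  have bnd: "fst u + snd u \<le> n" if "u \<in> V" for u
    using GammaV_sum[of u k] VG that unfolding n_def by blast
  have trm: "u \<in> terminals k" if "u \<in> V" "fst u + snd u = n" for u
    using GammaV_term[of u k] VG that unfolding n_def by blast
  define P where "P = {q. positive_path k q \<and> set q \<subseteq> V \<and> path_edges q \<subseteq> E}"
  have edge_P: "\<exists>q\<in>P. e \<in> path_edges q" if e: "e \<in> E" for e
  proof -
    obtain u v where uv: "e = (u,v)" by (cases e) blast
    have uV: "u \<in> V" "v \<in> V" using e uv unfolding V_def by force+
    obtain p where p: "epath E p" "set p \<subseteq> V" "hd p = (0,0)" "last p = u"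
      using back_walk[of V E u] inc uV(1) by blast
    have pne: "p \<noteq> []" using p(1) unfolding epath_def by blast
    have p1: "epath E (p @ [v])" using epath_snoc[OF p(1)] p(4) e uv by simp
    have p2: "set (p @ [v]) \<subseteq> V" using p(2) uV by simp
    obtain r where r: "epath E ((p @ [v]) @ r)" "set ((p @ [v]) @ r) \<subseteq> V"
         "last ((p @ [v]) @ r) \<in> terminals k"
      using fwd_walk[of V n E "terminals k" "p @ [v]"] out bnd trm p1 p2 by blast
    define q where "q = (p @ [v]) @ r"
    have qh: "hd q = (0,0)" unfolding q_def using p(3) pne by simp
    have eq: "e \<in> path_edges q"
      using path_edges_snoc_last[OF pne, of v] path_edges_append[of "p @ [v]" r] p(4) uv
      unfolding q_def by blast
    have qE: "path_edges q \<subseteq> E" using path_edges_sub[OF r(1)] unfolding q_def .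
    have dq: "is_dpath k q"
      unfolding is_dpath_def
    proof (intro conjI allI impI)
      show "q \<noteq> []" unfolding q_def by simp
      show "set q \<subseteq> GammaV k" using r(2) VG unfolding q_def by blast
      fix i assume "Suc i < length q"
      then have "(q!i, q!Suc i) \<in> E" using r(1) unfolding q_def epath_def by blast
      then show "(q!i, q!Suc i) \<in> GammaE k" using EGE by blast
    qed
    have "is_shortest_dpath k (0,0) (last q) q"
      unfolding is_shortest_dpath_def
    proof (intro conjI allI impI)
      show "is_dpath k q" "hd q = (0,0)" "last q = last q" using dq qh by auto
      fix q' assume q': "is_dpath k q' \<and> hd q' = (0, 0) \<and> last q' = last q"
      then show "length q \<le> length q'"
        using dpath_length[of k q] dpath_length[of k q'] dq qh by simp
    qed
    then have "positive_path k q" unfolding positive_path_def using r(3) q_def by blast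
    then have "q \<in> P" unfolding P_def using r(2) qE q_def by blast
    then show ?thesis using eq by blast
  qed
  have termV: "terminals k \<subseteq> V"
  proof
    fix t assume "t \<in> terminals k"
    then obtain l where l: "t = (nsum k l, n - nsum k l)" "l \<le> length k"
      unfolding terminals_def n_def by auto
    consider "l = 0" | "l = length k" | "0 < l" "l < length k" using l(2) by linarith
    then show "t \<in> V"
    proof cases
      case 1
      then have "t = (0, n - 1 + 1)" using l n1 by (simp add: nsum_def)
      then show ?thesis using memB1[of "n-1" n lam F] unfolding V_def E_def by force
    next
      case 2
      then have "t = (n - 1 + 1, 0)" using l n1 by (simp add: nsum_def n_def)
      then show ?thesis using memB2[of "n-1" n lam F] unfolding V_def E_def by force
    next
      case 3
      define m where "m = nsum k l"
      have tk: "take l k \<noteq> []" using 3 k_ne by simp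
      have "hd (take l k) \<in> set k" using tk by (metis hd_in_set in_set_takeD)
      then have "sum_list (take l k) \<noteq> 0" using k_pos tk by (metis hd_in_set sum_list_eq_0_iff gr_implies_not0)
      then have m1: "1 \<le> m" unfolding m_def nsum_def by linarith
      have dk: "drop l k \<noteq> []" using 3 by simp
      have "hd (drop l k) \<in> set k" using dk by (metis hd_in_set in_set_dropD)
      then have "sum_list (drop l k) \<noteq> 0" using k_pos dk by (metis hd_in_set sum_list_eq_0_iff gr_implies_not0)
      moreover have "sum_list k = sum_list (take l k) + sum_list (drop l k)"
        by (metis append_take_drop_id sum_list_append)
      ultimately have mn: "m < n" unfolding m_def nsum_def n_def by linarith
      have "m \<in> {nsum k l | l. 1 \<le> l \<and> l < length k}" using 3 unfolding m_def by auto
      then have "lam m > lam (Suc m)" using lam_blocks m1 mn unfolding n_def by (metis (no_types, lifting))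
      obtain x where x: "x \<in> F" using F_ne by blast
      have I: "(m, n - m) \<in> Iset n" using m1 mn unfolding Iset_def by auto
      have x1: "xext n lam x (m, n - m + 1) = lam m" using mn unfolding xext_def by simp
      have x2: "xext n lam x (m + 1, n - m) = lam (m+1)" using mn unfolding xext_def by simp
      have tm: "t = (m, n - m)" using l unfolding m_def by simp
      show ?thesis
      proof (cases "xext n lam x (m, n - m) < xext n lam x (m, n - m + 1)")
        case True
        then show ?thesis using memV[OF I x True] tm unfolding V_def E_def by force
      next
        case False
        then have "xext n lam x (m, n - m) > xext n lam x (m + 1, n - m)"
          using x1 x2 \<open>lam m > lam (Suc m)\<close> by simp
        then show ?thesis using memH[OF I x] tm unfolding V_def E_def by force
      qed
    qed
  qed
  have PV: "V = (\<Union>p\<in>P. set p)"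
  proof
    show "V \<subseteq> (\<Union>p\<in>P. set p)"
    proof
      fix v assume "v \<in> V"
      then obtain e where e: "e \<in> E" "v = fst e \<or> v = snd e" unfolding V_def by blast
      then obtain q where "q \<in> P" "e \<in> path_edges q" using edge_P by blast
      then show "v \<in> (\<Union>p\<in>P. set p)" using edge_in_set e(2) by blast
    qed
    show "(\<Union>p\<in>P. set p) \<subseteq> V" unfolding P_def by blast
  qed
  have PE: "E = (\<Union>p\<in>P. path_edges p)"
    using edge_P unfolding P_def by blast
  have "phi n lam F = (V, E)" unfolding phi_def V_def E_def by simp
  moreover have "(V, E) \<in> ladder_faces k"
  proof -
    have Ppos: "\<forall>p\<in>P. positive_path k p" unfolding P_def by blast
    show ?thesis unfolding ladder_faces_def using termV PV PE Ppos by auto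
  qed
  ultimately show ?thesis unfolding n_def by simp
qed

end
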